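(* Let $(\mathbf X_n^I)_{n\ge1}$ be adapted to the filtration $\mathcal G=(\mathcal G_n)_{n\ge0}$. The following are equivalent: (i) $(\mathbf X_n^I)$ is partially $\mathcal G$-c.i.d.; (ii) for every $j\in I$ and every bounded measurable $f:\mathbb X\to\mathbb R$, $\big(\mathbb E[f(X_{n+1,j})\mid\mathcal G_n^j]\big)_{n\ge0}$ is a martingale with respect to $\mathcal G^j=(\mathcal G_n^j)_{n\ge0}$; (iii) for every $n\ge0$ and $j\in I$, $(\mathbf X^{I\setminus\{j\}}_{n+1},X_{\tau+1,j})\overset{d}{=}(\mathbf X^{I\setminus\{j\}}_{n+1},X_{n+1,j})$ for every finite $\mathcal G$-stopping time $\tau$ with $\tau\ge n$.
   Context: All random elements live on $(\Omega,\mathcal F,\mathbb P)$; $\mathbb X$ is Polish with Borel $\sigma$-algebra $\mathcal X$; $I$ is a finite or countable index set; $[X_{n,i}]_{n\ge1,i\in I}$ is an array of $\mathbb X$-valued random variables with rows $\mathbf X_n^I=(X_{n,i})_{i\in I}$, and $\mathbf X_n^J=(X_{n,i})_{i\in J}$ for $J\subset I$. For a filtration $\mathcal G=(\mathcal G_n)_{n\ge0}$ and $j\in I$, $\mathcal G_n^j=\mathcal G_n\vee\sigma(X_{n+1,i}:i\ne j)$. The process $(\mathbf X_n^I)$ is partially $\mathcal G$-c.i.d. if it is adapted to $\mathcal G$ and, for every $j\in I$, $k\ge1$, $n\ge0$ and bounded measurable $f:\mathbb X\to\mathbb R$, $\mathbb E[f(X_{n+1,j})\mid\mathcal G_n^j]=\mathbb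 E[f(X_{n+k,j})\mid\mathcal G_n^j]$ a.s. *)

theory Defs
  imports "HOL-Probability.Probability"
begin

text \<open>Standing setup. The array entry X_{n,i} is X n i (rows n \<ge> 1; the value at n = 0 is
  irrelevant). A filtration G = (G_n)_{n \<ge> 0} is a family of sub-sigma-algebras of M,
  increasing in n.\<close>

definition is_filtration :: "'w measure \<Rightarrow> (nat \<Rightarrow> 'w measure) \<Rightarrow> bool" where
  "is_filtration M G \<longleftrightarrow> (\<forall>n. subalgebra M (G n)) \<and> (\<forall>n m. n \<le> m \<longrightarrow> sets (G n) \<subseteq> sets (G m))"

definition adapted_rows ::
  "(nat \<Rightarrow> 'w measure) \<Rightarrow> 'i set \<Rightarrow> (nat \<Rightarrow> 'i \<Rightarrow> 'w \<Rightarrow> 'x::topological_space) \<Rightarrow> bool" where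
  "adapted_rows G I X \<longleftrightarrow> (\<forall>n\<ge>1. \<forall>i\<in>I. X n i \<in> borel_measurable (G n))"

definition Gj ::
  "'w measure \<Rightarrow> (nat \<Rightarrow> 'w measure) \<Rightarrow> 'i set \<Rightarrow> (nat \<Rightarrow> 'i \<Rightarrow> 'w \<Rightarrow> 'x::topological_space)
     \<Rightarrow> 'i \<Rightarrow> nat \<Rightarrow> 'w measure" where
  "Gj M G I X j n = sigma (space M)
      (sets (G n) \<union> (\<Union>i\<in>I - {j}. {X (Suc n) i -` A \<inter> space M | A. A \<in> sets borel}))"

definition bdd_meas :: "('x::topological_space \<Rightarrow> real) \<Rightarrow> bool" where
  "bdd_meas f \<longleftrightarrow> f \<in> borel_measurable borel \<and> bounded (range f)"

definition partially_cid ::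
  "'w measure \<Rightarrow> (nat \<Rightarrow> 'w measure) \<Rightarrow> 'i set \<Rightarrow> (nat \<Rightarrow> 'i \<Rightarrow> 'w \<Rightarrow> 'x::topological_space) \<Rightarrow> bool" where
  "partially_cid M G I X \<longleftrightarrow> adapted_rows G I X \<and>
     (\<forall>j\<in>I. \<forall>k\<ge>1. \<forall>n. \<forall>f. bdd_meas f \<longrightarrow>
        (AE \<omega> in M. real_cond_exp M (Gj M G I X j n) (\<lambda>\<omega>. f (X (n + 1) j \<omega>)) \<omega>
                    = real_cond_exp M (Gj M G I X j n) (\<lambda>\<omega>. f (X (n + k) j \<omega>)) \<omega>))"

definition martingale :: "'w measure \<Rightarrow> (nat \<Rightarrow> 'w measure) \<Rightarrow> (nat \<Rightarrow> 'w \<Rightarrow> real) \<Rightarrow> bool" where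
  "martingale M F Y \<longleftrightarrow> (\<forall>n. Y n \<in> borel_measurable (F n) \<and> integrable M (Y n)) \<and>
     (\<forall>n m. n \<le> m \<longrightarrow> (AE \<omega> in M. real_cond_exp M (F n) (Y m) \<omega> = Y n \<omega>))"

end

theory Submission
  imports Defs
begin

lemma bdd_meas_bound: "bdd_meas f \<Longrightarrow> \<exists>B. \<forall>x. \<bar>f x\<bar> \<le> B"
  unfolding bdd_meas_def bounded_iff by auto


lemma dynkin_int:
  fixes u v :: "'a \<Rightarrow> real"
  assumes fm: "finite_measure M" and IS: "Int_stable E" and EP: "E \<subseteq> Pow (space M)"
    and Om: "space M \<in> E" and EM: "E \<subseteq> sets M"
    and um: "u \<in> borel_measurable M" and vm: "v \<in> borel_measurable M"
    and ub: "\<And>x. \<bar>u x\<bar> \<le> K" and vb: "\<And>x. \<bar>v x\<bar> \<le> K"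
    and base: "\<And>A. A \<in> E \<Longrightarrow> (\<integral>x. indicator A x * u x \<partial>M) = (\<integral>x. indicator A x * v x \<partial>M)"
    and A: "A \<in> sigma_sets (space M) E"
  shows "(\<integral>x. indicator A x * u x \<partial>M) = (\<integral>x. indicator A x * v x \<partial>M)"
proof -
  interpret finite_measure M by (rule fm)
  have SM: "sigma_sets (space M) E \<subseteq> sets M" using EM by (rule sets.sigma_sets_subset)
  have K0: "0 \<le> K" using ub[of undefined] by linarith
  have int: "integrable M (\<lambda>x. indicator S x * w x)" if "S \<in> sets M" "w \<in> borel_measurable M" "\<And>x. \<bar>w x\<bar> \<le> K"
    for S and w :: "'a \<Rightarrow> real"
  proof (rule integrable_const_bound[where B=K])
    show "AE x in M. norm (indicator S x * w x) \<le> K" using that(3) K0 by (auto simp: indicator_def)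
  qed (use that in measurable)
  from IS EP A show ?thesis
  proof (induction rule: sigma_sets_induct_disjoint)
    case (basic A) then show ?case by (rule base)
  next
    case empty then show ?case by simp
  next
    case (compl A)
    have AM: "A \<in> sets M" using compl(1) SM by blast
    have "(\<integral>x. indicator (space M - A) x * u x \<partial>M) = (\<integral>x. indicator (space M) x * u x - indicator A x * u x \<partial>M)"
      by (rule Bochner_Integration.integral_cong) (auto simp: indicator_def)
    also have "\<dots> = (\<integral>x. indicator (space M) x * u x \<partial>M) - (\<integral>x. indicator A x * u x \<partial>M)"
      by (rule Bochner_Integration.integral_diff) (use int AM um ub in auto)
    also have "\<dots> = (\<integral>x. indicator (space M) x * v x \<partial>M) - (\<integral>x. indicator A x * v x \<partial>M)"
      using base[OF Om] compl(2) by simp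
    also have "\<dots> = (\<integral>x. indicator (space M) x * v x - indicator A x * v x \<partial>M)"
      by (rule Bochner_Integration.integral_diff[symmetric]) (use int AM vm vb in auto)
    also have "\<dots> = (\<integral>x. indicator (space M - A) x * v x \<partial>M)"
      by (rule Bochner_Integration.integral_cong) (auto simp: indicator_def)
    finally show ?case .
  next
    case (union A)
    have AM: "A i \<in> sets M" for i using union(2) SM by blast
    have lim: "(\<lambda>N. \<integral>x. indicator (\<Union>i<N. A i) x * w x \<partial>M) \<longlonglongrightarrow> (\<integral>x. indicator (\<Union>i. A i) x * w x \<partial>M)"
      if "w \<in> borel_measurable M" "\<And>x. \<bar>w x\<bar> \<le> K" for w :: "'a \<Rightarrow> real"
    proof (rule integral_dominated_convergence[where w="\<lambda>_. K"])
      show "AE x in M. (\<lambda>N. indicator (\<Union>i<N. A i) x * w x) \<longlonglongrightarrow> indicator (\<Union>i. A i) x * w x"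
        by (intro AE_I2 tendsto_mult LIMSEQ_indicator_UN tendsto_const)
      show "AE x in M. norm (indicator (\<Union>i<N. A i) x * w x) \<le> K" for N
        using that(2) K0 by (auto simp: indicator_def)
    qed (use that AM in auto)
    have eqs: "(\<integral>x. indicator (\<Union>i<N. A i) x * w x \<partial>M) = (\<Sum>i<N. \<integral>x. indicator (A i) x * w x \<partial>M)"
      if "w \<in> borel_measurable M" "\<And>x. \<bar>w x\<bar> \<le> K" for w :: "'a \<Rightarrow> real" and N
    proof -
      have "(\<integral>x. indicator (\<Union>i<N. A i) x * w x \<partial>M) = (\<integral>x. (\<Sum>i<N. indicator (A i) x * w x) \<partial>M)"
      proof (rule Bochner_Integration.integral_cong[OF refl])
        fix x
        have "indicator (\<Union>i<N. A i) x = (\<Sum>i<N. indicator (A i) x :: real)"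
          using union(1) by (intro indicator_UN_disjoint) (auto simp: disjoint_family_on_def)
        then show "indicator (\<Union>i<N. A i) x * w x = (\<Sum>i<N. indicator (A i) x * w x)"
          by (simp add: sum_distrib_right)
      qed
      also have "\<dots> = (\<Sum>i<N. \<integral>x. indicator (A i) x * w x \<partial>M)"
        by (rule Bochner_Integration.integral_sum) (use int AM that in auto)
      finally show ?thesis .
    qed
    have "(\<lambda>N. \<integral>x. indicator (\<Union>i<N. A i) x * u x \<partial>M) = (\<lambda>N. \<integral>x. indicator (\<Union>i<N. A i) x * v x \<partial>M)"
      using eqs[OF um ub] eqs[OF vm vb] union(3) by simp
    then have l2: "(\<lambda>N. \<integral>x. indicator (\<Union>i<N. A i) x * u x \<partial>M) \<longlonglongrightarrow> (\<integral>x. indicator (\<Union>i. A i) x * v x \<partial>M)"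
      using lim[OF vm vb] by simp
    show ?case by (rule LIMSEQ_unique[OF lim[OF um ub] l2])
  qed
qed

locale cid = prob_space M for M :: "'w measure" +
  fixes G :: "nat \<Rightarrow> 'w measure" and I :: "'i set"
    and X :: "nat \<Rightarrow> 'i \<Rightarrow> 'w \<Rightarrow> 'x::topological_space"
  assumes filt: "is_filtration M G" and adapt: "adapted_rows G I X"
begin

abbreviation H where "H j n \<equiv> Gj M G I X j n"

lemma subG: "subalgebra M (G n)" using filt by (auto simp: is_filtration_def)
lemma space_G[simp]: "space (G n) = space M" using subG by (auto simp: subalgebra_def)
lemma sets_G_M: "sets (G n) \<subseteq> sets M" using subG by (auto simp: subalgebra_def)
lemma sets_G_mono: "n \<le> m \<Longrightarrow> sets (G n) \<subseteq> sets (G m)" using filt by (auto simp: is_filtration_def)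

lemma X_G: "1 \<le> n \<Longrightarrow> n \<le> m \<Longrightarrow> i \<in> I \<Longrightarrow> X n i \<in> borel_measurable (G m)"
proof -
  assume "1 \<le> n" "n \<le> m" "i \<in> I"
  then have "X n i \<in> borel_measurable (G n)" using adapt by (auto simp: adapted_rows_def)
  then show ?thesis using sets_G_mono[OF \<open>n \<le> m\<close>]
    by (auto simp: measurable_def)
qed

lemma X_M: "1 \<le> n \<Longrightarrow> i \<in> I \<Longrightarrow> X n i \<in> borel_measurable M"
  using X_G[of n n i] measurable_from_subalg[OF subG] by blast

lemma gen_sub: "sets (G n) \<union> (\<Union>i\<in>I - {j}. {X (Suc n) i -` A \<inter> space M | A. A \<in> sets borel}) \<subseteq> Pow (space M)"
  using sets.space_closed[of "G n"] by auto

lemma sets_H: "sets (H j n) = sigma_sets (space M) (sets (G n) \<union> (\<Union>i\<in>I - {j}. {X (Suc n) i -` A \<inter> space M | A. A \<in> sets borel}))"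
  unfolding Gj_def by (rule sets_measure_of[OF gen_sub])

lemma space_H[simp]: "space (H j n) = space M"
  unfolding Gj_def by (rule space_measure_of[OF gen_sub])

lemma H_in_sets:
  assumes "sets (G n) \<subseteq> sets N" "space N = space M"
     "\<And>i. i \<in> I - {j} \<Longrightarrow> X (Suc n) i \<in> borel_measurable N"
  shows "sets (H j n) \<subseteq> sets N"
  unfolding sets_H
proof (rule sets.sigma_sets_subset'[of _ N, unfolded assms(2)])
  show "sets (G n) \<union> (\<Union>i\<in>I - {j}. {X (Suc n) i -` A \<inter> space M |A. A \<in> sets borel}) \<subseteq> sets N"
    using assms(1) measurable_sets[OF assms(3)] assms(2) by fastforce
  show "space M \<in> sets N" using assms(2) sets.top[of N] by simp
qed

lemma sets_H_M: "sets (H j n) \<subseteq> sets M"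
  by (rule H_in_sets) (auto intro: sets_G_M[THEN subsetD] X_M)

lemma subH: "subalgebra M (H j n)"
  using sets_H_M by (auto simp: subalgebra_def)

lemma G_H: "sets (G n) \<subseteq> sets (H j n)"
  unfolding sets_H by (rule order_trans[OF _ sigma_sets_superset_generator]) auto

lemma X_H: "i \<in> I - {j} \<Longrightarrow> X (Suc n) i \<in> borel_measurable (H j n)"
  by (rule measurableI) (auto simp: sets_H)

lemma H_mono: "n \<le> m \<Longrightarrow> sets (H j n) \<subseteq> sets (H j m)"
proof (rule H_in_sets)
  assume "n \<le> m"
  show "sets (G n) \<subseteq> sets (H j m)" using sets_G_mono[OF \<open>n \<le> m\<close>] G_H by blast
  show "space (H j m) = space M" by simp
  fix i assume i: "i \<in> I - {j}"
  show "X (Suc n) i \<in> borel_measurable (H j m)"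
  proof (cases "n = m")
    case True then show ?thesis using X_H[OF i] by simp
  next
    case False
    then have "X (Suc n) i \<in> borel_measurable (G m)" using X_G[of "Suc n" m i] i \<open>n \<le> m\<close> by auto
    then show ?thesis using G_H[of m j] by (auto simp: measurable_def)
  qed
qed

lemma subHH: "n \<le> m \<Longrightarrow> subalgebra (H j m) (H j n)"
  using H_mono by (auto simp: subalgebra_def)

lemma sfH: "sigma_finite_subalgebra M (H j n)"
proof -
  interpret finite_measure_subalgebra M "H j n" by unfold_locales (rule subH)
  show ?thesis ..
qed

lemma Y_H: "n \<le> t \<Longrightarrow> (\<lambda>\<omega>. \<lambda>i\<in>I - {j}. X (n+1) i \<omega>) \<in> H j t \<rightarrow>\<^sub>M PiM (I - {j}) (\<lambda>_. borel)"
proof (rule measurable_restrict)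
  fix i assume "n \<le> t" "i \<in> I - {j}"
  show "X (n + 1) i \<in> borel_measurable (H j t)"
  proof (cases "n = t")
    case True then show ?thesis using X_H[of i j t] \<open>i \<in> I - {j}\<close> by simp
  next
    case False
    then have "X (Suc n) i \<in> borel_measurable (G t)" using X_G[of "Suc n" t i] \<open>i \<in> I - {j}\<close> \<open>n \<le> t\<close> by auto
    then show ?thesis using G_H[of t j] by (auto simp: measurable_def)
  qed
qed

lemma Y_M: "(\<lambda>\<omega>. \<lambda>i\<in>I - {j}. X (n+1) i \<omega>) \<in> M \<rightarrow>\<^sub>M PiM (I - {j}) (\<lambda>_. borel)"
  using measurable_from_subalg[OF subH Y_H[of n n]] by simp

lemma fX_int: "bdd_meas f \<Longrightarrow> 1 \<le> n \<Longrightarrow> j \<in> I \<Longrightarrow> integrable M (\<lambda>\<omega>. f (X n j \<omega>))"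
proof -
  assume a: "bdd_meas f" "1 \<le> n" "j \<in> I"
  then obtain B where B: "\<forall>x. \<bar>f x\<bar> \<le> B" using bdd_meas_bound by blast
  have "f \<in> borel_measurable borel" using a by (simp add: bdd_meas_def)
  then have m: "(\<lambda>\<omega>. f (X n j \<omega>)) \<in> borel_measurable M" using X_M[OF a(2,3)] by measurable
  show ?thesis by (rule integrable_const_bound[where B=B]) (use B m in auto)
qed


lemma nested:
  assumes "n \<le> m" "bdd_meas f" "j \<in> I" "1 \<le> p"
  shows "AE \<omega> in M. real_cond_exp M (H j n) (real_cond_exp M (H j m) (\<lambda>\<omega>. f (X p j \<omega>))) \<omega>
          = real_cond_exp M (H j n) (\<lambda>\<omega>. f (X p j \<omega>)) \<omega>"
  by (rule sigma_finite_subalgebra.real_cond_exp_nested_subalg[OF sfH subH subHH[OF assms(1)] fX_int[OF assms(2,4,3)]])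

lemma cid_iff_mart: "partially_cid M G I X \<longleftrightarrow> (\<forall>j\<in>I. \<forall>f. bdd_meas f \<longrightarrow>
                 martingale M (H j) (\<lambda>n. real_cond_exp M (H j n) (\<lambda>\<omega>. f (X (n + 1) j \<omega>))))"
proof
  assume c: "partially_cid M G I X"
  show "\<forall>j\<in>I. \<forall>f. bdd_meas f \<longrightarrow> martingale M (H j) (\<lambda>n. real_cond_exp M (H j n) (\<lambda>\<omega>. f (X (n + 1) j \<omega>)))"
  proof (intro ballI allI impI)
    fix j and f :: "'x \<Rightarrow> real" assume j: "j \<in> I" and f: "bdd_meas f"
    show "martingale M (H j) (\<lambda>n. real_cond_exp M (H j n) (\<lambda>\<omega>. f (X (n + 1) j \<omega>)))"
      unfolding martingale_def
    proof (intro conjI allI impI)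
      fix n
      show "real_cond_exp M (H j n) (\<lambda>\<omega>. f (X (n + 1) j \<omega>)) \<in> borel_measurable (H j n)" by simp
      show "integrable M (real_cond_exp M (H j n) (\<lambda>\<omega>. f (X (n + 1) j \<omega>)))"
        by (rule sigma_finite_subalgebra.real_cond_exp_int(1)[OF sfH fX_int[OF f _ j]]) simp
    next
      fix n m :: nat assume nm: "n \<le> m"
      have e1: "AE \<omega> in M. real_cond_exp M (H j n) (\<lambda>\<omega>. f (X (n + 1) j \<omega>)) \<omega>
                    = real_cond_exp M (H j n) (\<lambda>\<omega>. f (X (n + (m - n + 1)) j \<omega>)) \<omega>"
        using c j f unfolding partially_cid_def by (metis le_add2)
      have eq: "n + (m - n + 1) = m + 1" using nm by simp
      show "AE \<omega> in M. real_cond_exp M (H j n) (real_cond_exp M (H j m) (\<lambda>\<omega>. f (X (m + 1) j \<omega>))) \<omega> =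
              real_cond_exp M (H j n) (\<lambda>\<omega>. f (X (n + 1) j \<omega>)) \<omega>"
        using nested[OF nm f j, of "m+1"] e1 unfolding eq by auto
    qed
  qed
next
  assume m: "\<forall>j\<in>I. \<forall>f. bdd_meas f \<longrightarrow> martingale M (H j) (\<lambda>n. real_cond_exp M (H j n) (\<lambda>\<omega>. f (X (n + 1) j \<omega>)))"
  show "partially_cid M G I X"
    unfolding partially_cid_def
  proof (intro conjI adapt ballI allI impI)
    fix j and k n :: nat and f :: "'x \<Rightarrow> real" assume j: "j \<in> I" and k: "1 \<le> k" and f: "bdd_meas f"
    define p where "p = n + k - 1"
    have np: "n \<le> p" and eq: "p + 1 = n + k" using k by (auto simp: p_def)
    have "AE \<omega> in M. real_cond_exp M (H j n) (real_cond_exp M (H j p) (\<lambda>\<omega>. f (X (p + 1) j \<omega>))) \<omega> =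
              real_cond_exp M (H j n) (\<lambda>\<omega>. f (X (n + 1) j \<omega>)) \<omega>"
      using m j f np unfolding martingale_def by blast
    then show "AE \<omega> in M. real_cond_exp M (H j n) (\<lambda>\<omega>. f (X (n + 1) j \<omega>)) \<omega> =
                real_cond_exp M (H j n) (\<lambda>\<omega>. f (X (n + k) j \<omega>)) \<omega>"
      using nested[OF np f j, of "p+1"] k unfolding eq by auto
  qed
qed


lemma bint: "(h::'w\<Rightarrow>real) \<in> borel_measurable M \<Longrightarrow> (\<And>\<omega>. \<bar>h \<omega>\<bar> \<le> B) \<Longrightarrow> integrable M h"
  by (rule integrable_const_bound[where B=B]) auto

lemma ce_eq_int:
  assumes ae: "AE \<omega> in M. real_cond_exp M (H j t) u \<omega> = real_cond_exp M (H j t) v \<omega>"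
    and iu: "integrable M u" and iv: "integrable M v"
    and W: "W \<in> borel_measurable (H j t)" and Wb: "\<And>\<omega>. \<bar>W \<omega>\<bar> \<le> C"
  shows "(\<integral>\<omega>. W \<omega> * u \<omega> \<partial>M) = (\<integral>\<omega>. W \<omega> * v \<omega> \<partial>M)"
proof -
  interpret S: sigma_finite_subalgebra M "H j t" by (rule sfH)
  have WM: "W \<in> borel_measurable M" using measurable_from_subalg[OF subH W] .
  have um: "u \<in> borel_measurable M" and vm: "v \<in> borel_measurable M" using iu iv by auto
  have C0: "0 \<le> C" using Wb[of undefined] by linarith
  have i1: "integrable M (\<lambda>\<omega>. W \<omega> * u \<omega>)"
  proof (rule Bochner_Integration.integrable_bound[OF integrable_mult_right[OF iu, of C]])
    show "(\<lambda>\<omega>. W \<omega> * u \<omega>) \<in> borel_measurable M" using WM um by measurable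
    show "AE x in M. norm (W x * u x) \<le> norm (C * u x)"
      using Wb C0 by (auto simp: abs_mult intro!: mult_right_mono)
  qed
  have i2: "integrable M (\<lambda>\<omega>. W \<omega> * v \<omega>)"
  proof (rule Bochner_Integration.integrable_bound[OF integrable_mult_right[OF iv, of C]])
    show "(\<lambda>\<omega>. W \<omega> * v \<omega>) \<in> borel_measurable M" using WM vm by measurable
    show "AE x in M. norm (W x * v x) \<le> norm (C * v x)"
      using Wb C0 by (auto simp: abs_mult intro!: mult_right_mono)
  qed
  have "(\<integral>\<omega>. W \<omega> * u \<omega> \<partial>M) = (\<integral>\<omega>. W \<omega> * real_cond_exp M (H j t) u \<omega> \<partial>M)"
    using S.real_cond_exp_intg(2)[OF i1 W um] by simp
  also have "\<dots> = (\<integral>\<omega>. W \<omega> * real_cond_exp M (H j t) v \<omega> \<partial>M)"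
  proof (rule integral_cong_AE)
    show "(\<lambda>\<omega>. W \<omega> * real_cond_exp M (H j t) u \<omega>) \<in> borel_measurable M" using WM by measurable
    show "(\<lambda>\<omega>. W \<omega> * real_cond_exp M (H j t) v \<omega>) \<in> borel_measurable M" using WM by measurable
  qed (use ae in auto)
  also have "\<dots> = (\<integral>\<omega>. W \<omega> * v \<omega> \<partial>M)"
    using S.real_cond_exp_intg(2)[OF i2 W vm] by simp
  finally show ?thesis .
qed

lemma filtG: "filtration (space M) G"
  by unfold_locales (auto simp: sets_G_mono)

lemma st_eq_G: "stopping_time G \<tau> \<Longrightarrow> {\<omega>\<in>space M. \<tau> \<omega> = t} \<in> sets (G t)"
  using filtration.stopping_time_eq_const[OF filtG, of \<tau> t] by (simp add: pred_def)

lemma st_meas: "stopping_time G \<tau> \<Longrightarrow> \<tau> \<in> M \<rightarrow>\<^sub>M count_space UNIV"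
  unfolding measurable_count_space_eq2_countable
proof safe
  fix a assume "stopping_time G \<tau>"
  then have "{\<omega>\<in>space M. \<tau> \<omega> = a} \<in> sets M" using st_eq_G sets_G_M by blast
  moreover have "\<tau> -` {a} \<inter> space M = {\<omega>\<in>space M. \<tau> \<omega> = a}" by auto
  ultimately show "\<tau> -` {a} \<inter> space M \<in> sets M" by simp
qed simp

lemma fXs_meas: "bdd_meas f \<Longrightarrow> j \<in> I \<Longrightarrow> \<sigma> \<in> M \<rightarrow>\<^sub>M count_space UNIV \<Longrightarrow>
   (\<lambda>\<omega>. f (X (\<sigma> \<omega> + 1) j \<omega>)) \<in> borel_measurable M"
proof (rule measurable_compose_countable[where f="\<lambda>t \<omega>. f (X (t + 1) j \<omega>)"])
  fix t assume "bdd_meas f" "j \<in> I"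
  then have "f \<in> borel_measurable borel" by (simp add: bdd_meas_def)
  then show "(\<lambda>\<omega>. f (X (t + 1) j \<omega>)) \<in> borel_measurable M"
    using X_M[of "t+1" j] \<open>j \<in> I\<close> by measurable
qed

abbreviation Yv where "Yv j n \<equiv> (\<lambda>\<omega>. \<lambda>i\<in>I - {j}. X (n+1) i \<omega>)"

lemma bounded_stop:
  assumes c: "partially_cid M G I X" and j: "j \<in> I" and f: "bdd_meas f"
    and C: "C \<in> sets (PiM (I - {j}) (\<lambda>_. borel))" and st: "stopping_time G \<tau>"
    and bnd: "\<And>\<omega>. \<omega> \<in> space M \<Longrightarrow> n \<le> \<tau> \<omega> \<and> \<tau> \<omega> \<le> N"
  shows "(\<integral>\<omega>. indicator C (Yv j n \<omega>) * f (X (\<tau> \<omega> + 1) j \<omega>) \<partial>M)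
       = (\<integral>\<omega>. indicator C (Yv j n \<omega>) * f (X (N + 1) j \<omega>) \<partial>M)"
proof -
  obtain B where B: "\<And>x. \<bar>f x\<bar> \<le> B" using bdd_meas_bound[OF f] by blast
  have fm: "f \<in> borel_measurable borel" using f by (simp add: bdd_meas_def)
  define W :: "nat \<Rightarrow> 'w \<Rightarrow> real" where "W t \<omega> = indicator C (Yv j n \<omega>) * indicator {\<omega>\<in>space M. \<tau> \<omega> = t} \<omega>" for t \<omega>
  have Wb: "\<bar>W t \<omega>\<bar> \<le> 1" for t \<omega> by (simp add: W_def indicator_def)
  have WH: "W t \<in> borel_measurable (H j t)" if "n \<le> t" for t
  proof -
    have "subalgebra (H j t) (G t)" using G_H by (auto simp: subalgebra_def)
    then have "indicator {\<omega>\<in>space M. \<tau> \<omega> = t} \<in> borel_measurable (H j t)"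
      using measurable_from_subalg borel_measurable_indicator[OF st_eq_G[OF st]] by blast
    moreover have "(\<lambda>\<omega>. indicator C (Yv j n \<omega>)::real) \<in> borel_measurable (H j t)"
      using Y_H[OF that] C by measurable
    ultimately show ?thesis unfolding W_def by measurable
  qed
  have WM: "W t \<in> borel_measurable M" for t
  proof -
    have "indicator {\<omega>\<in>space M. \<tau> \<omega> = t} \<in> borel_measurable M"
      using sets_G_M st_eq_G[OF st] by (intro borel_measurable_indicator) blast
    moreover have "(\<lambda>\<omega>. indicator C (Yv j n \<omega>)::real) \<in> borel_measurable M"
      using Y_M C by measurable
    ultimately show ?thesis unfolding W_def by measurable
  qed
  have fXm: "(\<lambda>\<omega>. f (X (t + 1) j \<omega>)) \<in> borel_measurable M" for t
    using X_M[of "t+1" j] j fm by measurable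
  have int: "integrable M (\<lambda>\<omega>. W t \<omega> * f (X s j \<omega>))" if "1 \<le> s" for t s
  proof (rule bint[where B=B])
    show "(\<lambda>\<omega>. W t \<omega> * f (X s j \<omega>)) \<in> borel_measurable M"
      using WM[of t] X_M[OF that j] fm by measurable
    show "\<bar>W t \<omega> * f (X s j \<omega>)\<bar> \<le> B" for \<omega>
    proof -
      have "\<bar>W t \<omega> * f (X s j \<omega>)\<bar> = \<bar>W t \<omega>\<bar> * \<bar>f (X s j \<omega>)\<bar>" by (simp add: abs_mult)
      also have "\<dots> \<le> 1 * B" using Wb[of t \<omega>] B[of "X s j \<omega>"] by (intro mult_mono) auto
      finally show ?thesis by simp
    qed
  qed
  have sum1: "(\<Sum>t\<in>{n..N}. W t \<omega> * h t) = indicator C (Yv j n \<omega>) * h (\<tau> \<omega>)"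
    if "\<omega> \<in> space M" for \<omega> and h :: "nat \<Rightarrow> real"
  proof -
    have "(\<Sum>t\<in>{n..N}. W t \<omega> * h t) = (\<Sum>t\<in>{n..N}. if t = \<tau> \<omega> then indicator C (Yv j n \<omega>) * h t else 0)"
      using that by (intro sum.cong) (auto simp: W_def indicator_def)
    also have "\<dots> = indicator C (Yv j n \<omega>) * h (\<tau> \<omega>)"
      using bnd[OF that] by (simp add: sum.delta')
    finally show ?thesis .
  qed
  have "(\<integral>\<omega>. indicator C (Yv j n \<omega>) * f (X (\<tau> \<omega> + 1) j \<omega>) \<partial>M)
      = (\<integral>\<omega>. (\<Sum>t\<in>{n..N}. W t \<omega> * f (X (t + 1) j \<omega>)) \<partial>M)"
  proof (rule Bochner_Integration.integral_cong[OF refl])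
    fix \<omega> assume "\<omega> \<in> space M"
    show "indicator C (Yv j n \<omega>) * f (X (\<tau> \<omega> + 1) j \<omega>) = (\<Sum>t\<in>{n..N}. W t \<omega> * f (X (t + 1) j \<omega>))"
      using sum1[OF \<open>\<omega> \<in> space M\<close>, of "\<lambda>t. f (X (t+1) j \<omega>)"] by simp
  qed
  also have "\<dots> = (\<Sum>t\<in>{n..N}. (\<integral>\<omega>. W t \<omega> * f (X (t + 1) j \<omega>) \<partial>M))"
    by (rule Bochner_Integration.integral_sum) (rule int, simp)
  also have "\<dots> = (\<Sum>t\<in>{n..N}. (\<integral>\<omega>. W t \<omega> * f (X (N + 1) j \<omega>) \<partial>M))"
  proof (rule sum.cong)
    fix t assume t: "t \<in> {n..N}"
    have ae: "AE \<omega> in M. real_cond_exp M (H j t) (\<lambda>\<omega>. f (X (t + 1) j \<omega>)) \<omega>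
                  = real_cond_exp M (H j t) (\<lambda>\<omega>. f (X (t + (N - t + 1)) j \<omega>)) \<omega>"
      using c j f unfolding partially_cid_def by (metis le_add2)
    have eq: "t + (N - t + 1) = N + 1" using t by simp
    show "(\<integral>\<omega>. W t \<omega> * f (X (t + 1) j \<omega>) \<partial>M) = (\<integral>\<omega>. W t \<omega> * f (X (N + 1) j \<omega>) \<partial>M)"
      by (rule ce_eq_int[OF ae[unfolded eq] fX_int[OF f _ j] fX_int[OF f _ j] WH Wb]) (use t in auto)
  qed simp
  also have "\<dots> = (\<integral>\<omega>. (\<Sum>t\<in>{n..N}. W t \<omega> * f (X (N + 1) j \<omega>)) \<partial>M)"
    by (rule Bochner_Integration.integral_sum[symmetric]) (rule int, simp)
  also have "\<dots> = (\<integral>\<omega>. indicator C (Yv j n \<omega>) * f (X (N + 1) j \<omega>) \<partial>M)"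
  proof (rule Bochner_Integration.integral_cong[OF refl])
    fix \<omega> assume "\<omega> \<in> space M"
    show "(\<Sum>t\<in>{n..N}. W t \<omega> * f (X (N + 1) j \<omega>)) = indicator C (Yv j n \<omega>) * f (X (N + 1) j \<omega>)"
      using sum1[OF \<open>\<omega> \<in> space M\<close>, of "\<lambda>t. f (X (N+1) j \<omega>)"] by simp
  qed
  finally show ?thesis .
qed


lemma stop_eq:
  assumes c: "partially_cid M G I X" and j: "j \<in> I" and f: "bdd_meas f"
    and C: "C \<in> sets (PiM (I - {j}) (\<lambda>_. borel))" and st: "stopping_time G \<tau>"
    and ge: "\<And>\<omega>. \<omega> \<in> space M \<Longrightarrow> n \<le> \<tau> \<omega>"
  shows "(\<integral>\<omega>. indicator C (Yv j n \<omega>) * f (X (\<tau> \<omega> + 1) j \<omega>) \<partial>M)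
       = (\<integral>\<omega>. indicator C (Yv j n \<omega>) * f (X (n + 1) j \<omega>) \<partial>M)"
proof -
  obtain B where B: "\<And>x. \<bar>f x\<bar> \<le> B" using bdd_meas_bound[OF f] by blast
  have B0: "0 \<le> B" using B[of undefined] by linarith
  define s where "s N = (\<lambda>\<omega>. indicator C (Yv j n \<omega>) * f (X (min (\<tau> \<omega>) N + 1) j \<omega>))" for N
  have stN: "stopping_time G (\<lambda>\<omega>. min (\<tau> \<omega>) N)" for N
    by (rule stopping_time_min[OF st stopping_time_const])
  have gm: "(\<lambda>\<omega>. indicator C (Yv j n \<omega>)::real) \<in> borel_measurable M"
    using Y_M C by measurable
  have sm: "s N \<in> borel_measurable M" for N
    unfolding s_def using gm fXs_meas[OF f j st_meas[OF stN]] by measurable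
  have tm: "(\<lambda>\<omega>. indicator C (Yv j n \<omega>) * f (X (\<tau> \<omega> + 1) j \<omega>)) \<in> borel_measurable M"
    using gm fXs_meas[OF f j st_meas[OF st]] by measurable
  have lim1: "(\<lambda>N. integral\<^sup>L M (s N)) \<longlonglongrightarrow> (\<integral>\<omega>. indicator C (Yv j n \<omega>) * f (X (\<tau> \<omega> + 1) j \<omega>) \<partial>M)"
  proof (rule integral_dominated_convergence[where w="\<lambda>_. B"])
    show "integrable M (\<lambda>_. B)" by simp
    show "AE x in M. (\<lambda>i. s i x) \<longlonglongrightarrow> indicator C (Yv j n x) * f (X (\<tau> x + 1) j x)"
    proof (rule AE_I2)
      fix x assume "x \<in> space M"
      show "(\<lambda>i. s i x) \<longlonglongrightarrow> indicator C (Yv j n x) * f (X (\<tau> x + 1) j x)"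
      proof (rule tendsto_eventually)
        show "\<forall>\<^sub>F i in sequentially. s i x = indicator C (Yv j n x) * f (X (\<tau> x + 1) j x)"
          using eventually_ge_at_top[of "\<tau> x"] by (rule eventually_mono) (simp add: s_def)
      qed
    qed
    show "AE x in M. norm (s i x) \<le> B" for i
      using B B0 by (auto simp: s_def indicator_def abs_mult)
  qed (use sm tm in auto)
  have eqN: "integral\<^sup>L M (s N) = (\<integral>\<omega>. indicator C (Yv j n \<omega>) * f (X (n + 1) j \<omega>) \<partial>M)" if "n \<le> N" for N
  proof -
    have "integral\<^sup>L M (s N) = (\<integral>\<omega>. indicator C (Yv j n \<omega>) * f (X (N + 1) j \<omega>) \<partial>M)"
      unfolding s_def by (rule bounded_stop[OF c j f C stN]) (use ge that in auto)
    also have "\<dots> = (\<integral>\<omega>. indicator C (Yv j n \<omega>) * f (X (n + 1) j \<omega>) \<partial>M)"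
      by (rule bounded_stop[OF c j f C stopping_time_const, symmetric]) (use that in auto)
    finally show ?thesis .
  qed
  have lim2: "(\<lambda>N. integral\<^sup>L M (s N)) \<longlonglongrightarrow> (\<integral>\<omega>. indicator C (Yv j n \<omega>) * f (X (n + 1) j \<omega>) \<partial>M)"
    by (rule tendsto_eventually, rule eventually_mono[OF eventually_ge_at_top[of n]]) (rule eqN)
  show ?thesis using LIMSEQ_unique[OF lim1 lim2] .
qed


lemma bdd_ind: "b \<in> sets borel \<Longrightarrow> bdd_meas (indicator b :: 'x \<Rightarrow> real)"
proof -
  assume b: "b \<in> sets borel"
  have "range (indicator b :: 'x \<Rightarrow> real) \<subseteq> {0,1}" by (auto simp: indicator_def)
  then have "bounded (range (indicator b :: 'x \<Rightarrow> real))"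
    by (rule bounded_subset[OF finite_imp_bounded, rotated]) simp
  then show ?thesis using b unfolding bdd_meas_def by simp
qed

lemma em_rect:
  assumes h: "h \<in> M \<rightarrow>\<^sub>M (A \<Otimes>\<^sub>M B)" and a: "a \<in> sets A" and b: "b \<in> sets B"
  shows "emeasure (distr M (A \<Otimes>\<^sub>M B) h) (a \<times> b) = ennreal (\<integral>\<omega>. indicator a (fst (h \<omega>)) * indicator b (snd (h \<omega>)) \<partial>M)"
proof -
  have ab: "a \<times> b \<in> sets (A \<Otimes>\<^sub>M B)" using a b by simp
  have S: "h -` (a \<times> b) \<inter> space M \<in> sets M" using measurable_sets[OF h ab] .
  have "emeasure (distr M (A \<Otimes>\<^sub>M B) h) (a \<times> b) = emeasure M (h -` (a \<times> b) \<inter> space M)"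
    by (rule emeasure_distr[OF h ab])
  also have "\<dots> = ennreal (measure M (h -` (a \<times> b) \<inter> space M))" by (rule emeasure_eq_measure)
  also have "measure M (h -` (a \<times> b) \<inter> space M) = (\<integral>\<omega>. indicator (h -` (a \<times> b) \<inter> space M) \<omega> \<partial>M)"
    by (simp add: Int_absorb2)
  also have "\<dots> = (\<integral>\<omega>. indicator a (fst (h \<omega>)) * indicator b (snd (h \<omega>)) \<partial>M)"
  proof (rule Bochner_Integration.integral_cong[OF refl])
    fix \<omega> assume "\<omega> \<in> space M"
    then show "indicator (h -` (a \<times> b) \<inter> space M) \<omega> = indicator a (fst (h \<omega>)) * (indicator b (snd (h \<omega>)) :: real)"
      by (cases "h \<omega>") (auto simp: indicator_def)
  qed
  finally show ?thesis .
qed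

lemma Xs_meas: "j \<in> I \<Longrightarrow> \<sigma> \<in> M \<rightarrow>\<^sub>M count_space UNIV \<Longrightarrow>
   (\<lambda>\<omega>. X (\<sigma> \<omega> + 1) j \<omega>) \<in> borel_measurable M"
  by (rule measurable_compose_countable[where f="\<lambda>t \<omega>. X (t + 1) j \<omega>"]) (auto intro: X_M)

lemma cid_to_distr:
  assumes c: "partially_cid M G I X" and j: "j \<in> I" and st: "stopping_time G \<tau>"
    and ge: "\<forall>\<omega>\<in>space M. n \<le> \<tau> \<omega>"
  shows "distr M (PiM (I - {j}) (\<lambda>_. borel) \<Otimes>\<^sub>M borel)
                   (\<lambda>\<omega>. (\<lambda>i\<in>I - {j}. X (n + 1) i \<omega>, X (\<tau> \<omega> + 1) j \<omega>))
                 = distr M (PiM (I - {j}) (\<lambda>_. borel) \<Otimes>\<^sub>M borel)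
                   (\<lambda>\<omega>. (\<lambda>i\<in>I - {j}. X (n + 1) i \<omega>, X (n + 1) j \<omega>))"
    (is "distr M ?P ?h1 = distr M ?P ?h0")
proof -
  let ?A = "PiM (I - {j}) (\<lambda>_. borel) :: ('i \<Rightarrow> 'x) measure"
  let ?E = "{a \<times> b | a b. a \<in> sets ?A \<and> b \<in> sets (borel :: 'x measure)}"
  let ?\<Omega> = "space ?A \<times> space (borel :: 'x measure)"
  have h1: "?h1 \<in> M \<rightarrow>\<^sub>M ?P" by (rule measurable_Pair[OF Y_M Xs_meas[OF j st_meas[OF st]]])
  have h0: "?h0 \<in> M \<rightarrow>\<^sub>M ?P" by (rule measurable_Pair[OF Y_M X_M]) (use j in auto)
  interpret D: prob_space "distr M ?P ?h1" by (rule prob_space_distr[OF h1])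
  show ?thesis
  proof (rule measure_eqI_generator_eq[where E="?E" and \<Omega>="?\<Omega>" and A="\<lambda>_. ?\<Omega>"])
    show "Int_stable ?E" by (rule Int_stable_pair_measure_generator)
    show "?E \<subseteq> Pow ?\<Omega>" by (rule pair_measure_closed)
    show "sets (distr M ?P ?h1) = sigma_sets ?\<Omega> ?E" by (simp add: sets_pair_measure)
    show "sets (distr M ?P ?h0) = sigma_sets ?\<Omega> ?E" by (simp add: sets_pair_measure)
    show "range (\<lambda>_. ?\<Omega>) \<subseteq> ?E" by blast
    show "(\<Union>i::nat. ?\<Omega>) = ?\<Omega>" by simp
    show "emeasure (distr M ?P ?h1) ?\<Omega> \<noteq> \<infinity>" for i::nat
      using D.emeasure_finite by simp
  next
    fix Z assume "Z \<in> ?E"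
    then obtain a b where Z: "Z = a \<times> b" and a: "a \<in> sets ?A" and b: "b \<in> sets (borel :: 'x measure)" by blast
    have "emeasure (distr M ?P ?h1) Z = ennreal (\<integral>\<omega>. indicator a (Yv j n \<omega>) * indicator b (X (\<tau> \<omega> + 1) j \<omega>) \<partial>M)"
      unfolding Z using em_rect[OF h1 a b] by simp
    also have "(\<integral>\<omega>. indicator a (Yv j n \<omega>) * indicator b (X (\<tau> \<omega> + 1) j \<omega>) \<partial>M)
             = (\<integral>\<omega>. indicator a (Yv j n \<omega>) * indicator b (X (n + 1) j \<omega>) \<partial>M :: real)"
      using stop_eq[OF c j bdd_ind[OF b] a st, of n] ge by simp
    also have "ennreal \<dots> = emeasure (distr M ?P ?h0) Z"
      unfolding Z using em_rect[OF h0 a b] by simp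
    finally show "emeasure (distr M ?P ?h1) Z = emeasure (distr M ?P ?h0) Z" .
  qed
qed


lemma distr_to_cid:
  assumes D: "\<forall>n. \<forall>j\<in>I. \<forall>\<tau> :: 'w \<Rightarrow> nat. stopping_time G \<tau> \<and> (\<forall>\<omega>\<in>space M. n \<le> \<tau> \<omega>) \<longrightarrow>
                 distr M (PiM (I - {j}) (\<lambda>_. borel) \<Otimes>\<^sub>M borel)
                   (\<lambda>\<omega>. (\<lambda>i\<in>I - {j}. X (n + 1) i \<omega>, X (\<tau> \<omega> + 1) j \<omega>))
                 = distr M (PiM (I - {j}) (\<lambda>_. borel) \<Otimes>\<^sub>M borel)
                   (\<lambda>\<omega>. (\<lambda>i\<in>I - {j}. X (n + 1) i \<omega>, X (n + 1) j \<omega>))"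
  shows "partially_cid M G I X"
  unfolding partially_cid_def
proof (intro conjI adapt ballI allI impI)
  fix j and k n :: nat and f :: "'x \<Rightarrow> real"
  assume j: "j \<in> I" and k: "1 \<le> k" and f: "bdd_meas f"
  let ?A = "PiM (I - {j}) (\<lambda>_. borel) :: ('i \<Rightarrow> 'x) measure"
  let ?P = "?A \<Otimes>\<^sub>M (borel :: 'x measure)"
  define u where "u \<omega> = f (X (n + k) j \<omega>)" for \<omega>
  define v where "v \<omega> = f (X (n + 1) j \<omega>)" for \<omega>
  obtain K where K: "\<And>x. \<bar>f x\<bar> \<le> K" using bdd_meas_bound[OF f] by blast
  have fm: "f \<in> borel_measurable borel" using f by (simp add: bdd_meas_def)
  have Xk: "X (n+k) j \<in> borel_measurable M" using X_M[of "n+k" j] j k by simp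
  have X1: "X (n+1) j \<in> borel_measurable M" using X_M[of "n+1" j] j by simp
  have um: "u \<in> borel_measurable M" unfolding u_def using Xk fm by measurable
  have vm: "v \<in> borel_measurable M" unfolding v_def using X1 fm by measurable
  have iu: "integrable M u" unfolding u_def by (rule fX_int[OF f _ j]) (use k in simp)
  have iv: "integrable M v" unfolding v_def by (rule fX_int[OF f _ j]) simp
  interpret S: sigma_finite_subalgebra M "H j n" by (rule sfH)
  define Y where "Y = Yv j n"
  define E where "E = {B \<inter> Y -` Cc \<inter> space M | B Cc. B \<in> sets (G n) \<and> Cc \<in> sets ?A}"
  have Ym: "Y \<in> M \<rightarrow>\<^sub>M ?A" unfolding Y_def by (rule Y_M)
  have Om: "space M \<in> E"
  proof -
    have "space M = space M \<inter> Y -` space ?A \<inter> space M" using measurable_space[OF Ym] by auto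
    moreover have "space M \<in> sets (G n)" using sets.top[of "G n"] by simp
    ultimately show ?thesis unfolding E_def by blast
  qed
  have EM: "E \<subseteq> sets M"
  proof
    fix Z assume "Z \<in> E"
    then obtain B Cc where Z0: "Z = B \<inter> Y -` Cc \<inter> space M" and B: "B \<in> sets (G n)" and Cc: "Cc \<in> sets ?A"
      unfolding E_def by blast
    have Z: "Z = B \<inter> (Y -` Cc \<inter> space M)" unfolding Z0 by (simp add: Int_assoc)
    have "B \<in> sets M" using B sets_G_M by blast
    moreover have "Y -` Cc \<inter> space M \<in> sets M" by (rule measurable_sets[OF Ym Cc])
    ultimately show "Z \<in> sets M" unfolding Z by blast
  qed
  have EP: "E \<subseteq> Pow (space M)" unfolding E_def by auto
  have IS: "Int_stable E"
    unfolding Int_stable_def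
  proof safe
    fix Z1 Z2 assume "Z1 \<in> E" "Z2 \<in> E"
    then obtain B1 C1 B2 C2 where "Z1 = B1 \<inter> Y -` C1 \<inter> space M" "B1 \<in> sets (G n)" "C1 \<in> sets ?A"
       "Z2 = B2 \<inter> Y -` C2 \<inter> space M" "B2 \<in> sets (G n)" "C2 \<in> sets ?A"
      unfolding E_def by blast
    moreover have "(B1 \<inter> Y -` C1 \<inter> space M) \<inter> (B2 \<inter> Y -` C2 \<inter> space M)
        = (B1 \<inter> B2) \<inter> Y -` (C1 \<inter> C2) \<inter> space M" by auto
    ultimately show "Z1 \<inter> Z2 \<in> E" unfolding E_def by blast
  qed
  have HE: "sets (H j n) \<subseteq> sigma_sets (space M) E"
    unfolding sets_H
  proof (rule sigma_sets_mono)
    have g1: "B \<in> sigma_sets (space M) E" if B: "B \<in> sets (G n)" for B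
    proof -
      have "B = B \<inter> Y -` space ?A \<inter> space M"
        using measurable_space[OF Ym] sets.sets_into_space[OF B] by auto
      then have "B \<in> E" unfolding E_def using B by blast
      then show ?thesis by blast
    qed
    have g2: "X (Suc n) i -` a \<inter> space M \<in> sigma_sets (space M) E"
      if i: "i \<in> I - {j}" and a: "a \<in> sets (borel :: 'x measure)" for i a
    proof -
      let ?C = "(\<lambda>y. y i) -` a \<inter> space ?A"
      have "(\<lambda>y. y i) \<in> ?A \<rightarrow>\<^sub>M (borel :: 'x measure)"
        using measurable_component_singleton[of i "I - {j}" "\<lambda>_. borel"] i by simp
      from measurable_sets[OF this a] have Cs: "?C \<in> sets ?A" .
      have "X (Suc n) i -` a \<inter> space M = space M \<inter> Y -` ?C \<inter> space M"
        using measurable_space[OF Ym] i unfolding Y_def by auto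
      moreover have "space M \<in> sets (G n)" using sets.top[of "G n"] by simp
      ultimately have "X (Suc n) i -` a \<inter> space M \<in> E" unfolding E_def using Cs by blast
      then show ?thesis by blast
    qed
    show "sets (G n) \<union> (\<Union>i\<in>I - {j}. {X (Suc n) i -` A \<inter> space M |A. A \<in> sets borel}) \<subseteq> sigma_sets (space M) E"
      using g1 g2 by blast
  qed
  have base: "(\<integral>x. indicator Z x * u x \<partial>M) = (\<integral>x. indicator Z x * v x \<partial>M)" if "Z \<in> E" for Z
  proof -
    obtain B Cc where Z: "Z = B \<inter> Y -` Cc \<inter> space M" and B: "B \<in> sets (G n)" and Cc: "Cc \<in> sets ?A"
      using \<open>Z \<in> E\<close> unfolding E_def by blast
    define \<tau> where "\<tau> \<omega> = (if \<omega> \<in> B then n + k - 1 else n)" for \<omega>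
    have st: "stopping_time G \<tau>"
    proof (rule stopping_timeI)
      fix t
      have "{\<omega>\<in>space (G t). \<tau> \<omega> \<le> t} \<in> sets (G t)"
      proof (cases "t < n")
        case True
        then have e: "{\<omega>\<in>space (G t). \<tau> \<omega> \<le> t} = {}" using k by (auto simp: \<tau>_def)
        show ?thesis unfolding e by (rule sets.empty_sets)
      next
        case False
        then have Bt: "B \<in> sets (G t)" using B sets_G_mono[of n t] by auto
        show ?thesis
        proof (cases "n + k - 1 \<le> t")
          case True
          then have e: "{\<omega>\<in>space (G t). \<tau> \<omega> \<le> t} = space (G t)" using False by (auto simp: \<tau>_def)
          show ?thesis unfolding e by (rule sets.top)
        next
          case False2: False
          then have e: "{\<omega>\<in>space (G t). \<tau> \<omega> \<le> t} = space (G t) - B" using False by (auto simp: \<tau>_def)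
          show ?thesis unfolding e by (rule sets.compl_sets[OF Bt])
        qed
      qed
      then show "Measurable.pred (G t) (\<lambda>\<omega>. \<tau> \<omega> \<le> t)" by (simp add: pred_def)
    qed
    have ge: "\<forall>\<omega>\<in>space M. n \<le> \<tau> \<omega>" using k by (auto simp: \<tau>_def)
    have h1: "(\<lambda>\<omega>. (Y \<omega>, X (\<tau> \<omega> + 1) j \<omega>)) \<in> M \<rightarrow>\<^sub>M ?P"
      by (rule measurable_Pair[OF Ym Xs_meas[OF j st_meas[OF st]]])
    have h0: "(\<lambda>\<omega>. (Y \<omega>, X (n + 1) j \<omega>)) \<in> M \<rightarrow>\<^sub>M ?P"
      by (rule measurable_Pair[OF Ym X_M]) (use j in auto)
    have Fm: "(\<lambda>p. indicator Cc (fst p) * f (snd p)) \<in> borel_measurable ?P"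
      using Cc fm by measurable
    have deq: "distr M ?P (\<lambda>\<omega>. (Y \<omega>, X (\<tau> \<omega> + 1) j \<omega>)) = distr M ?P (\<lambda>\<omega>. (Y \<omega>, X (n + 1) j \<omega>))"
      unfolding Y_def by (rule mp[OF D[THEN spec[where x=n], THEN bspec[OF _ j], THEN spec[where x=\<tau>]]]) (use st ge in simp)
    have E1: "(\<integral>\<omega>. indicator Cc (Y \<omega>) * f (X (\<tau> \<omega> + 1) j \<omega>) \<partial>M)
        = (\<integral>\<omega>. indicator Cc (Y \<omega>) * f (X (n + 1) j \<omega>) \<partial>M)"
      using integral_distr[OF h1 Fm] integral_distr[OF h0 Fm] deq by simp
    have gm: "(\<lambda>\<omega>. indicator Cc (Y \<omega>) :: real) \<in> borel_measurable M" using Ym Cc by measurable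
    have Zm: "Z \<in> sets M" using EM \<open>Z \<in> E\<close> by blast
    have K0: "0 \<le> K" using K[of undefined] by linarith
    have bi: "integrable M (\<lambda>\<omega>. g \<omega> * w \<omega>)" if "g \<in> borel_measurable M" "\<And>\<omega>. \<bar>g \<omega>\<bar> \<le> 1"
      "w \<in> borel_measurable M" "\<And>\<omega>. \<bar>w \<omega>\<bar> \<le> K" for g w :: "'w \<Rightarrow> real"
    proof (rule bint[where B=K])
      show "(\<lambda>\<omega>. g \<omega> * w \<omega>) \<in> borel_measurable M" using that by measurable
      show "\<bar>g \<omega> * w \<omega>\<bar> \<le> K" for \<omega>
      proof -
        have "\<bar>g \<omega> * w \<omega>\<bar> = \<bar>g \<omega>\<bar> * \<bar>w \<omega>\<bar>" by (simp add: abs_mult)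
        also have "\<dots> \<le> 1 * K" using that(2,4)[of \<omega>] by (intro mult_mono) auto
        finally show ?thesis by simp
      qed
    qed
    have ub: "\<bar>u \<omega>\<bar> \<le> K" "\<bar>v \<omega>\<bar> \<le> K" for \<omega> using K by (auto simp: u_def v_def)
    have i1: "integrable M (\<lambda>\<omega>. indicator Z \<omega> * u \<omega>)" by (rule bi) (use Zm um ub in auto)
    have i2: "integrable M (\<lambda>\<omega>. indicator Cc (Y \<omega>) * v \<omega>)" by (rule bi) (use gm vm ub in auto)
    have i3: "integrable M (\<lambda>\<omega>. indicator Z \<omega> * v \<omega>)" by (rule bi) (use Zm vm ub in auto)
    have eqk: "n + k - 1 + 1 = n + k" using k by simp
    have "(\<integral>\<omega>. indicator Cc (Y \<omega>) * f (X (\<tau> \<omega> + 1) j \<omega>) \<partial>M)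
        = (\<integral>\<omega>. indicator Z \<omega> * u \<omega> + indicator Cc (Y \<omega>) * v \<omega> - indicator Z \<omega> * v \<omega> \<partial>M)"
    proof (rule Bochner_Integration.integral_cong[OF refl])
      fix \<omega> assume om: "\<omega> \<in> space M"
      have iz: "indicator Z \<omega> = (if \<omega> \<in> B then indicator Cc (Y \<omega>) else (0::real))"
        using om unfolding Z by (simp add: indicator_def)
      show "indicator Cc (Y \<omega>) * f (X (\<tau> \<omega> + 1) j \<omega>)
          = indicator Z \<omega> * u \<omega> + indicator Cc (Y \<omega>) * v \<omega> - indicator Z \<omega> * v \<omega>"
      proof (cases "\<omega> \<in> B")
        case True
        then have t: "\<tau> \<omega> + 1 = n + k" using eqk by (simp add: \<tau>_def)
        have z: "indicator Z \<omega> = (indicator Cc (Y \<omega>) :: real)" using iz True by simp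
        show ?thesis unfolding t z by (simp add: u_def)
      next
        case False
        then have t: "\<tau> \<omega> + 1 = n + 1" by (simp add: \<tau>_def)
        have z: "indicator Z \<omega> = (0 :: real)" using iz False by simp
        show ?thesis unfolding t z by (simp add: v_def)
      qed
    qed
    also have "\<dots> = (\<integral>\<omega>. indicator Z \<omega> * u \<omega> \<partial>M) + (\<integral>\<omega>. indicator Cc (Y \<omega>) * v \<omega> \<partial>M)
                   - (\<integral>\<omega>. indicator Z \<omega> * v \<omega> \<partial>M)"
      using i1 i2 i3 by simp
    finally show ?thesis using E1 unfolding v_def by simp
  qed
  have setint: "(\<integral>x. indicator A x * u x \<partial>M) = (\<integral>x. indicator A x * v x \<partial>M)" if "A \<in> sets (H j n)" for A
  proof (rule dynkin_int[OF _ IS EP Om EM um vm])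
    show "finite_measure M" by (rule finite_measure_axioms)
    show "\<bar>u x\<bar> \<le> K" "\<bar>v x\<bar> \<le> K" for x using K by (auto simp: u_def v_def)
    show "A \<in> sigma_sets (space M) E" using that HE by blast
  qed (rule base)
  have "AE \<omega> in M. real_cond_exp M (H j n) v \<omega> = real_cond_exp M (H j n) u \<omega>"
  proof (rule S.real_cond_exp_charact)
    fix A assume A: "A \<in> sets (H j n)"
    have "(LINT x:A|M. v x) = (LINT x:A|M. u x)"
      using setint[OF A] by (simp add: set_lebesgue_integral_def)
    also have "\<dots> = (LINT x:A|M. real_cond_exp M (H j n) u x)" by (rule S.real_cond_exp_intA[OF iu A])
    finally show "(LINT x:A|M. v x) = (LINT x:A|M. real_cond_exp M (H j n) u x)" .
  qed (use iv S.real_cond_exp_int(1)[OF iu] in auto)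
  then show "AE \<omega> in M. real_cond_exp M (H j n) (\<lambda>\<omega>. f (X (n + 1) j \<omega>)) \<omega> =
                real_cond_exp M (H j n) (\<lambda>\<omega>. f (X (n + k) j \<omega>)) \<omega>"
    unfolding u_def v_def .
qed

lemma cid_iff_distr: "partially_cid M G I X \<longleftrightarrow> (\<forall>n. \<forall>j\<in>I. \<forall>\<tau> :: 'w \<Rightarrow> nat. stopping_time G \<tau> \<and> (\<forall>\<omega>\<in>space M. n \<le> \<tau> \<omega>) \<longrightarrow>
                 distr M (PiM (I - {j}) (\<lambda>_. borel) \<Otimes>\<^sub>M borel)
                   (\<lambda>\<omega>. (\<lambda>i\<in>I - {j}. X (n + 1) i \<omega>, X (\<tau> \<omega> + 1) j \<omega>))
                 = distr M (PiM (I - {j}) (\<lambda>_. borel) \<Otimes>\<^sub>M borel)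
                   (\<lambda>\<omega>. (\<lambda>i\<in>I - {j}. X (n + 1) i \<omega>, X (n + 1) j \<omega>)))"
  using cid_to_distr distr_to_cid by blast

end

theorem mainTheorem3:
  fixes M :: "'w measure"
    and G :: "nat \<Rightarrow> 'w measure"
    and I :: "'i set"
    and X :: "nat \<Rightarrow> 'i \<Rightarrow> 'w \<Rightarrow> 'x::polish_space"
  assumes "prob_space M"
    and "countable I"
    and "is_filtration M G"
    and "adapted_rows G I X"
  shows "(partially_cid M G I X
           \<longleftrightarrow> (\<forall>j\<in>I. \<forall>f. bdd_meas f \<longrightarrow>
                 martingale M (Gj M G I X j)
                   (\<lambda>n. real_cond_exp M (Gj M G I X j n) (\<lambda>\<omega>. f (X (n + 1) j \<omega>)))))
       \<and> (partially_cid M G I X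
           \<longleftrightarrow> (\<forall>n. \<forall>j\<in>I. \<forall>\<tau> :: 'w \<Rightarrow> nat. stopping_time G \<tau> \<and> (\<forall>\<omega>\<in>space M. n \<le> \<tau> \<omega>) \<longrightarrow>
                 distr M (PiM (I - {j}) (\<lambda>_. borel) \<Otimes>\<^sub>M borel)
                   (\<lambda>\<omega>. (\<lambda>i\<in>I - {j}. X (n + 1) i \<omega>, X (\<tau> \<omega> + 1) j \<omega>))
                 = distr M (PiM (I - {j}) (\<lambda>_. borel) \<Otimes>\<^sub>M borel)
                   (\<lambda>\<omega>. (\<lambda>i\<in>I - {j}. X (n + 1) i \<omega>, X (n + 1) j \<omega>))))"
proof -
  interpret cid M G I X using assms(1,3,4) by (simp add: cid_def cid_axioms_def)
  show ?thesis using cid_iff_mart cid_iff_distr by blast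
qed

end
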